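(* Let $a$ and $b$ be relatively prime integers with $1<a<b$, let $(u,v)$ be the definitely least solution of $ax+by=1$, and let $S=\langle a,b\rangle$. Then the number of indices $i\in\{1,\dots,a-1\}$ with $I_{i,a}(S)\neq\varnothing$ is $|v|$, i.e. $\#\{I_{i,a}(S): I_{i,a}(S)\neq\varnothing,\ i\in[1,a-1]\}=|v|$.
   Context: $\langle a,b\rangle=\{\lambda_1a+\lambda_2b:\lambda_1,\lambda_2\in\mathbb{N}\}$. $I(S)$ is the set of isolated gaps of $S$ ($x\in\mathbb{N}\setminus S$ with $x-1,x+1\in S$), and $I_{i,a}(S)=\{s\in I(S):s\equiv i\pmod a\}$. The definitely least solution $(u,v)$ of $ax+by=1$ is the unique integer solution with $|u|,|v|$ minimal; equivalently the one with $|u|\le b/2$, $|v|\le a/2$. *)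

theory Defs
  imports "HOL-Number_Theory.Cong"
begin

definition gen2 :: "nat \<Rightarrow> nat \<Rightarrow> nat set" where
  "gen2 a b = {l1 * a + l2 * b | l1 l2. True}"

definition isolated_gaps :: "nat set \<Rightarrow> nat set" where
  "isolated_gaps S = {x. x \<notin> S \<and> 0 < x \<and> x - 1 \<in> S \<and> x + 1 \<in> S}"

definition isolated_gaps_res :: "nat \<Rightarrow> nat \<Rightarrow> nat set \<Rightarrow> nat set" where
  "isolated_gaps_res i a S = {s \<in> isolated_gaps S. [s = i] (mod a)}"

definition definitely_least_solution :: "int \<Rightarrow> int \<Rightarrow> int \<Rightarrow> int \<Rightarrow> bool" where
  "definitely_least_solution a b u v \<longleftrightarrow>
     a * u + b * v = 1 \<and> 2 * \<bar>u\<bar> \<le> \<bar>b\<bar> \<and> 2 * \<bar>v\<bar> \<le> \<bar>a\<bar>"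

end

theory Submission
  imports Defs
begin

lemma mem_gen2:
  fixes a b c x :: nat
  assumes a1: "1 < a" and bc: "(b*c) mod a = 1"
  shows "x \<in> gen2 a b \<longleftrightarrow> ((x*c) mod a)*b \<le> x"
proof
  assume "x \<in> gen2 a b"
  then obtain l1 l2 where x: "x = l1*a + l2*b" unfolding gen2_def by blast
  have "(x*c) mod a = (l2*(b*c)) mod a" unfolding x
    by (simp add: algebra_simps)
  also have "\<dots> = (l2 * ((b*c) mod a)) mod a" by (simp add: mod_mult_right_eq)
  also have "\<dots> = l2 mod a" using bc by simp
  finally have "(x*c) mod a \<le> l2" by simp
  then have "((x*c) mod a)*b \<le> l2*b" by (rule mult_le_mono1)
  moreover have "l2*b \<le> x" unfolding x by simp
  ultimately show "((x*c) mod a)*b \<le> x" by (rule order_trans)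
next
  define k where "k = (x*c) mod a"
  assume le: "((x*c) mod a)*b \<le> x"
  have "(k*b) mod a = (x*(b*c)) mod a" unfolding k_def
    by (metis mod_mult_left_eq mult.commute mult.left_commute)
  also have "\<dots> = (x*((b*c) mod a)) mod a" by (simp add: mod_mult_right_eq)
  also have "\<dots> = x mod a" using bc by simp
  finally have "x mod a = (k*b) mod a" by simp
  then have "a dvd x - k*b" using le k_def by (simp add: mod_eq_dvd_iff_nat)
  then obtain l where "x - k*b = a*l" by blast
  then have "x = l*a + k*b" using le k_def by (simp add: algebra_simps)
  then show "x \<in> gen2 a b" unfolding gen2_def by blast
qed

theorem proposition3p9:
  fixes a b :: nat and u v :: int
  assumes "coprime a b" and "1 < a" and "a < b"
    and "definitely_least_solution (int a) (int b) u v"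
  shows "int (card {i \<in> {1..a-1}. isolated_gaps_res i a (gen2 a b) \<noteq> {}}) = \<bar>v\<bar>"
proof -
  have a1: "1 < a" and ab: "a < b" using assms by auto
  have eq: "int a * u + int b * v = 1" and vb: "2 * \<bar>v\<bar> \<le> int a"
    using assms(4) unfolding definitely_least_solution_def by auto
  define c where "c = nat (v mod int a)"
  have ci: "int c = v mod int a" unfolding c_def using a1 by simp
  have ca: "c < a" using ci a1
    by (metis Euclidean_Rings.pos_mod_bound of_nat_0_less_iff of_nat_less_iff order.strict_trans zero_less_one)
  have "int ((b*c) mod a) = (int b * (v mod int a)) mod int a" using ci by (simp add: zmod_int)
  also have "\<dots> = (int b * v) mod int a" by (simp add: mod_mult_right_eq)
  also have "\<dots> = (1 - int a * u) mod int a" using eq by (metis add_diff_cancel_left')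
  also have "\<dots> = 1" using a1 by (simp add: mod_diff_eq[symmetric])
  finally have bc: "(b*c) mod a = 1" by simp
  have c1: "1 \<le> c" using bc by (cases c) auto
  define K where "K = (\<lambda>j::nat. (j*c) mod a)"
  have memS: "\<And>x. x \<in> gen2 a b \<longleftrightarrow> K x * b \<le> x"
    unfolding K_def using mem_gen2[OF a1 bc] by blast
  have Kmod: "\<And>x y. x mod a = y mod a \<Longrightarrow> K x = K y"
    unfolding K_def by (metis mod_mult_left_eq)
  have KSuc: "\<And>j. K (Suc j) = (K j + c) mod a"
    unfolding K_def by (simp add: algebra_simps mod_add_right_eq)
  have Kb: "\<And>j. (K j * b) mod a = j mod a"
  proof -
    fix j
    have "(K j * b) mod a = (j*(b*c)) mod a" unfolding K_def
      by (metis mod_mult_left_eq mult.commute mult.left_commute)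
    also have "\<dots> = (j*((b*c) mod a)) mod a" by (simp add: mod_mult_right_eq)
    finally show "(K j * b) mod a = j mod a" using bc by simp
  qed
  have Klt: "\<And>j. K j < a" unfolding K_def using a1 by simp
  have char: "isolated_gaps_res i a (gen2 a b) \<noteq> {} \<longleftrightarrow> c \<le> K i \<and> a \<le> K i + c"
    if i: "i \<in> {1..a-1}" for i
  proof -
    obtain j where j: "i = Suc j" using i by (cases i) auto
    have Ki: "K i = (K j + c) mod a" using KSuc j by simp
    have Ki1: "K (Suc i) = (K i + c) mod a" using KSuc by simp
    have cond1: "K j < K i \<longleftrightarrow> c \<le> K i"
      using Ki Klt[of j] Klt[of i] ca c1
      by (cases "K j + c < a") (auto simp: mod_if)
    have cond2: "K (Suc i) < K i \<longleftrightarrow> a \<le> K i + c"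
      using Ki1 Klt[of i] ca c1
      by (cases "K i + c < a") (auto simp: mod_if)
    have neq: "K (Suc i) \<noteq> K i"
      using Ki1 Klt[of i] ca c1 by (cases "K i + c < a") (auto simp: mod_if)
    show ?thesis
    proof
      assume "isolated_gaps_res i a (gen2 a b) \<noteq> {}"
      then obtain x where x: "x \<notin> gen2 a b" "0 < x" "x - 1 \<in> gen2 a b" "x + 1 \<in> gen2 a b"
        "x mod a = i mod a"
        unfolding isolated_gaps_res_def isolated_gaps_def cong_def by blast
      obtain y where y: "x = Suc y" using x(2) by (cases x) auto
      have "y mod a = j mod a" using x(5) y j cong_add_rcancel_nat[of y 1 j a] by (simp add: cong_def)
      then have Ky: "K y = K j" by (rule Kmod)
      have Kx: "K x = K i" using x(5) by (rule Kmod)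
      have "Suc x mod a = Suc i mod a" using x(5) cong_add_rcancel_nat[of x 1 i a] by (simp add: cong_def)
      then have Kx1: "K (Suc x) = K (Suc i)" by (rule Kmod)
      have A: "x < K i * b" using x(1) memS Kx by auto
      have B: "K j * b \<le> y" using x(3) memS y Ky by auto
      have C: "K (Suc i) * b \<le> Suc x" using x(4) memS Kx1 by auto
      have "K j * b < K i * b" using A B y by linarith
      then have "K j < K i" by simp
      moreover have "K (Suc i) * b \<le> K i * b" using A C by linarith
      then have "K (Suc i) \<le> K i" using ab by simp
      ultimately show "c \<le> K i \<and> a \<le> K i + c" using cond1 cond2 neq by auto
    next
      assume h: "c \<le> K i \<and> a \<le> K i + c"
      then have lt1: "K j < K i" and lt2: "K (Suc i) < K i" using cond1 cond2 by auto
      define x where "x = K i * b - a"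
      have kb: "K i * b \<ge> b" using lt1 by simp
      have xge: "x \<ge> b - a" unfolding x_def using kb by linarith
      have x0: "0 < x" using xge ab by simp
      have xa: "x + a = K i * b" unfolding x_def using kb ab by linarith
      have xm: "x mod a = i mod a" using Kb[of i] xa by (metis mod_add_self2)
      obtain y where y: "x = Suc y" using x0 by (cases x) auto
      have "y mod a = j mod a" using xm y j cong_add_rcancel_nat[of y 1 j a] by (simp add: cong_def)
      then have Ky: "K y = K j" by (rule Kmod)
      have Kx: "K x = K i" using xm by (rule Kmod)
      have "Suc x mod a = Suc i mod a" using xm cong_add_rcancel_nat[of x 1 i a] by (simp add: cong_def)
      then have Kx1: "K (Suc x) = K (Suc i)" by (rule Kmod)
      have "x \<notin> gen2 a b" using memS Kx xa a1 by auto
      moreover have "K j * b \<le> y"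
      proof -
        have "K j * b + b \<le> K i * b" using lt1
          by (metis add_mult_distrib Suc_leI mult_Suc mult_le_mono1 add.commute)
        then show ?thesis using xa y ab by linarith
      qed
      then have "x - 1 \<in> gen2 a b" using memS Ky y by simp
      moreover have "K (Suc i) * b + b \<le> K i * b" using lt2
        by (metis add_mult_distrib Suc_leI mult_Suc mult_le_mono1 add.commute)
      then have "x + 1 \<in> gen2 a b" using memS Kx1 xa ab by simp
      ultimately have "x \<in> isolated_gaps_res i a (gen2 a b)"
        unfolding isolated_gaps_res_def isolated_gaps_def cong_def using x0 xm by auto
      then show "isolated_gaps_res i a (gen2 a b) \<noteq> {}" by blast
    qed
  qed
  have S1: "{i \<in> {1..a-1}. isolated_gaps_res i a (gen2 a b) \<noteq> {}}
      = {i \<in> {1..a-1}. c \<le> K i \<and> a \<le> K i + c}" using char by blast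
  have K0: "\<And>i. i \<in> {1..a-1} \<Longrightarrow> K i \<in> {1..a-1}"
  proof -
    fix i assume i: "i \<in> {1..a-1}"
    have "K i \<noteq> 0"
    proof
      assume "K i = 0"
      then have "i mod a = 0" using Kb[of i] by simp
      moreover have "i < a" using i a1 by auto
      then have "i mod a = i" by simp
      ultimately show False using i by simp
    qed
    then show "K i \<in> {1..a-1}" using Klt[of i] by auto
  qed
  have injK: "inj_on K {1..a-1}"
  proof
    fix i j assume i: "i \<in> {1..a-1}" and j: "j \<in> {1..a-1}" and "K i = K j"
    then have "i mod a = j mod a" using Kb by metis
    moreover have "i < a" "j < a" using i j a1 by auto
    ultimately show "i = j" by simp
  qed
  have imgK: "K ` {i \<in> {1..a-1}. c \<le> K i \<and> a \<le> K i + c} = {k \<in> {1..a-1}. c \<le> k \<and> a \<le> k + c}"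
  proof
    show "K ` {i \<in> {1..a-1}. c \<le> K i \<and> a \<le> K i + c} \<subseteq> {k \<in> {1..a-1}. c \<le> k \<and> a \<le> k + c}"
      using K0 by auto
  next
    show "{k \<in> {1..a-1}. c \<le> k \<and> a \<le> k + c} \<subseteq> K ` {i \<in> {1..a-1}. c \<le> K i \<and> a \<le> K i + c}"
    proof
      fix k assume k: "k \<in> {k \<in> {1..a-1}. c \<le> k \<and> a \<le> k + c}"
      define i where "i = (k*b) mod a"
      have "K i = (k*(b*c)) mod a" unfolding K_def i_def
        by (metis mod_mult_left_eq mult.assoc)
      also have "\<dots> = (k*((b*c) mod a)) mod a" by (simp add: mod_mult_right_eq)
      moreover have "k < a" using k a1 by auto
      ultimately have Ki: "K i = k" using bc by simp
      have "i \<noteq> 0" proof assume "i = 0" then have "K i = 0" unfolding K_def by simp then show False using Ki k by simp qed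
      moreover have "i < a" unfolding i_def using a1 by simp
      ultimately have "i \<in> {1..a-1}" by auto
      then show "k \<in> K ` {i \<in> {1..a-1}. c \<le> K i \<and> a \<le> K i + c}" using Ki k by force
    qed
  qed
  have "card {i \<in> {1..a-1}. c \<le> K i \<and> a \<le> K i + c} = card {k \<in> {1..a-1}. c \<le> k \<and> a \<le> k + c}"
  proof -
    have "inj_on K {i \<in> {1..a-1}. c \<le> K i \<and> a \<le> K i + c}"
      by (rule inj_on_subset[OF injK]) auto
    then have "card (K ` {i \<in> {1..a-1}. c \<le> K i \<and> a \<le> K i + c}) = card {i \<in> {1..a-1}. c \<le> K i \<and> a \<le> K i + c}"
      by (rule card_image)
    then show ?thesis unfolding imgK by simp
  qed
  also have "{k \<in> {1..a-1}. c \<le> k \<and> a \<le> k + c} = {max c (a-c)..a-1}" using c1 ca by auto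
  also have "card \<dots> = a - max c (a-c)" using c1 ca by simp
  finally have cardeq: "card {i \<in> {1..a-1}. isolated_gaps_res i a (gen2 a b) \<noteq> {}} = a - max c (a-c)"
    using S1 by simp
  show ?thesis
  proof (cases "v \<ge> 0")
    case True
    have "v < int a" using vb a1 True by linarith
    then have "v mod int a = v" using True by simp
    then have "int c = v" using ci by simp
    then show ?thesis using cardeq vb True ca by simp
  next
    case False
    have "- int a < v" using vb a1 False by linarith
    then have "(v + int a) mod int a = v + int a" using False
      by (intro mod_pos_pos_trivial) auto
    then have "v mod int a = v + int a" by simp
    then have "int c = v + int a" using ci by simp
    then show ?thesis using cardeq vb False ca by simp
  qed
qed

end
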